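(* Let $q$ be a prime number, $l\ge 2$ an integer, and $\alpha=\alpha_1/\alpha_2\in\mathbb{Q}\text{-}\mathcal{KS}(q^{l})$. Then $\alpha\in\,]0,1[$ if and only if there exists a positive integer $d$ with $d\mid(q^{l}-q)$ such that $$\alpha=q-\frac{d}{\alpha_2}\quad\text{and}\quad \alpha_2\in\Bigl\{\Bigl\lfloor\frac{d}{q}\Bigr\rfloor+1,\dots,\Bigl\lceil\frac{d}{q-1}\Bigr\rceil-1\Bigr\}.$$
   Context: Every nonzero rational $\alpha$ is written $\alpha=\alpha_1/\alpha_2$ with $\alpha_1\in\mathbb{Z}$, $\alpha_2$ a positive integer and $\gcd(\alpha_1,\alpha_2)=1$. For an integer $N\ge 2$ and a nonzero rational $\alpha=\alpha_1/\alpha_2$, $N$ is called an $\alpha$-Korselt number if $N\neq\alpha$ and $\alpha_2p-\alpha_1$ divides $\alpha_2N-\alpha_1$ (in $\mathbb{Z}$) for every prime divisor $p$ of $N$. $\mathbb{Q}\text{-}\mathcal{KS}(N)$ is the set of all $\beta\in\mathbb{Q}\setminus\{0,N\}$ such that $N$ is a $\beta$-Korselt number. $\lfloor\cdot\rfloor$ and $\lceil\cdot\rceil$ are the floor and ceiling functions; $\{a,\dots,b\}$ is the set of integers from $a$ to $b$ (empty if $a>b$). *)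

theory Defs
  imports Complex_Main "HOL-Computational_Algebra.Primes"
begin

definition num :: "rat \<Rightarrow> int" where "num a = fst (quotient_of a)"
definition den :: "rat \<Rightarrow> int" where "den a = snd (quotient_of a)"

definition korselt :: "nat \<Rightarrow> rat \<Rightarrow> bool" where
  "korselt N a \<longleftrightarrow> N \<ge> 2 \<and> a \<noteq> 0 \<and> a \<noteq> of_nat N \<and>
     (\<forall>p. prime p \<longrightarrow> p dvd N \<longrightarrow>
        (den a * int p - num a) dvd (den a * int N - num a))"

definition QKS :: "nat \<Rightarrow> rat set" where
  "QKS N = {b. b \<noteq> 0 \<and> b \<noteq> of_nat N \<and> korselt N b}"

end

theory Submission
  imports Defs
begin

theorem proposition5p5:
  fixes q l :: nat and \<alpha> :: rat
  assumes "prime q" and "l \<ge> 2" and "\<alpha> \<in> QKS (q ^ l)"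
  shows "(0 < \<alpha> \<and> \<alpha> < 1) \<longleftrightarrow>
    (\<exists>d::nat. d > 0 \<and> d dvd (q ^ l - q) \<and>
       \<alpha> = of_nat q - of_nat d / of_int (den \<alpha>) \<and>
       den \<alpha> \<in> {\<lfloor>(of_nat d / of_nat q :: rat)\<rfloor> + 1 ..
                    \<lceil>(of_nat d / (of_nat q - 1) :: rat)\<rceil> - 1})"
proof -
  define a1 where "a1 = num \<alpha>"
  define a2 where "a2 = den \<alpha>"
  have q2: "q \<ge> 2" using assms(1) prime_ge_2_nat by blast
  have qa: "\<alpha> = of_int a1 / of_int a2"
    unfolding a1_def a2_def num_def den_def by (simp add: quotient_of_div)
  have a2pos: "a2 > 0" unfolding a2_def den_def
    by (metis prod.collapse quotient_of_denom_pos)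
  have cop: "coprime a1 a2" unfolding a1_def a2_def num_def den_def
    by (metis prod.collapse quotient_of_coprime)
  have qd: "(a2 * int q - a1) dvd (a2 * int (q ^ l) - a1)"
  proof -
    have "q dvd q ^ l" using assms(2) by (simp add: dvd_power)
    thus ?thesis using assms(3) assms(1) unfolding QKS_def korselt_def a1_def a2_def
      by auto
  qed
  show ?thesis
  proof
    assume h: "0 < \<alpha> \<and> \<alpha> < 1"
    have a1pos: "a1 > 0" using h qa a2pos
      by (simp add: zero_less_divide_iff)
    have a12: "a1 < a2" using h qa a2pos
      by (simp add: divide_less_eq)
    define D where "D = a2 * int q - a1"
    have Dpos: "D > 0"
      proof -
      have "a2 * int q \<ge> a2 * 2" using q2 a2pos by (intro mult_left_mono) auto
      thus ?thesis using a12 a1pos D_def by linarith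
    qed
    have ql: "q ^ l \<ge> q" using q2 assms(2)
      proof -
      have "q ^ 1 \<le> q ^ l" using q2 assms(2) by (intro power_increasing) auto
      thus ?thesis by simp
    qed
    have eq: "a2 * int (q ^ l) - a1 = D + a2 * int (q ^ l - q)"
      unfolding D_def using ql by (simp add: of_nat_diff algebra_simps)
    have "D dvd a2 * int (q ^ l - q)" using qd eq unfolding D_def
      by (metis dvd_add_right_iff dvd_refl)
    moreover have "coprime D a2" proof (rule coprimeI)
      fix c assume c1: "c dvd D" and c2: "c dvd a2"
      have "c dvd a2 * int q - D" using c1 c2 by (simp add: dvd_diff)
      hence "c dvd a1" unfolding D_def by simp
      thus "is_unit c" using c2 cop coprime_common_divisor by blast
    qed
    ultimately have Ddvd: "D dvd int (q ^ l - q)"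
      using coprime_dvd_mult_right_iff by blast
    define d where "d = nat D"
    have dD: "int d = D" unfolding d_def using Dpos by simp
    have dr: "(of_nat d :: rat) = of_int D"
      by (metis dD of_int_of_nat_eq)
    show "\<exists>d::nat. d > 0 \<and> d dvd (q ^ l - q) \<and>
       \<alpha> = of_nat q - of_nat d / of_int (den \<alpha>) \<and>
       den \<alpha> \<in> {\<lfloor>(of_nat d / of_nat q :: rat)\<rfloor> + 1 ..
                    \<lceil>(of_nat d / (of_nat q - 1) :: rat)\<rceil> - 1}"
    proof (intro exI conjI)
      show "d > 0" using dD Dpos by simp
      show "d dvd q ^ l - q" using Ddvd dD by (metis of_nat_dvd_iff)
      show "\<alpha> = of_nat q - of_nat d / of_int (den \<alpha>)"
      proof -
        have "of_nat q - of_nat d / of_int a2 = (of_int a1 / of_int a2 :: rat)"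
        proof -
          have nz: "(of_int a2 :: rat) \<noteq> 0" using a2pos by simp
          have "(of_nat d :: rat) / of_int a2 = (of_int a2 * of_nat q - of_int a1) / of_int a2"
            unfolding dr D_def by simp
          also have "\<dots> = of_int a2 * of_nat q / of_int a2 - of_int a1 / of_int a2"
            by (rule diff_divide_distrib)
          also have "\<dots> = of_nat q - of_int a1 / of_int a2" using nz by simp
          finally show ?thesis by simp
        qed
        moreover have e: "(of_int (den \<alpha>) :: rat) = of_int a2" by (simp add: a2_def)
        ultimately show ?thesis unfolding e using qa by simp
      qed
      have "(of_nat d / of_nat q :: rat) < of_int a2"
        unfolding dr D_def using q2 a1pos by (simp add: divide_less_eq)
      hence "\<lfloor>(of_nat d / of_nat q :: rat)\<rfloor> < a2" by (simp add: floor_less_iff)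
      moreover have "of_int a2 < (of_nat d / (of_nat q - 1) :: rat)"
        unfolding dr D_def using q2 a12 by (simp add: less_divide_eq algebra_simps)
      hence "a2 < \<lceil>(of_nat d / (of_nat q - 1) :: rat)\<rceil>" by (simp add: less_ceiling_iff)
      ultimately show "den \<alpha> \<in> {\<lfloor>(of_nat d / of_nat q :: rat)\<rfloor> + 1 ..
                    \<lceil>(of_nat d / (of_nat q - 1) :: rat)\<rceil> - 1}"
        unfolding a2_def by simp
    qed
  next
    assume "\<exists>d::nat. d > 0 \<and> d dvd (q ^ l - q) \<and>
       \<alpha> = of_nat q - of_nat d / of_int (den \<alpha>) \<and>
       den \<alpha> \<in> {\<lfloor>(of_nat d / of_nat q :: rat)\<rfloor> + 1 ..
                    \<lceil>(of_nat d / (of_nat q - 1) :: rat)\<rceil> - 1}"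
    then obtain d :: nat where ad: "\<alpha> = of_nat q - of_nat d / of_int a2"
      and lo: "\<lfloor>(of_nat d / of_nat q :: rat)\<rfloor> + 1 \<le> a2"
      and hi: "a2 \<le> \<lceil>(of_nat d / (of_nat q - 1) :: rat)\<rceil> - 1"
      unfolding a2_def by auto
    have "\<lfloor>(of_nat d / of_nat q :: rat)\<rfloor> < a2" using lo by simp
    hence l1: "(of_nat d / of_nat q :: rat) < of_int a2" by (simp add: floor_less_iff)
    have "a2 < \<lceil>(of_nat d / (of_nat q - 1) :: rat)\<rceil>" using hi by simp
    hence l2: "of_int a2 < (of_nat d / (of_nat q - 1) :: rat)" by (simp add: less_ceiling_iff)
    have qp: "(of_nat q :: rat) > 1" using q2 by simp
    have "(of_nat d :: rat) < of_int a2 * of_nat q" using l1 q2 by (simp add: divide_less_eq)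
    hence "0 < \<alpha>" unfolding ad using a2pos by (simp add: field_simps)
    moreover have "of_int a2 * (of_nat q - 1) < (of_nat d :: rat)" using l2 qp
      by (simp add: less_divide_eq)
    hence "\<alpha> < 1" unfolding ad using a2pos by (simp add: field_simps)
    ultimately show "0 < \<alpha> \<and> \<alpha> < 1" by simp
  qed
qed

end
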